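(* In a combinatorial auction as described in the context, the VCG payments can be linearized to PME prices — i.e. there exist finitely many valid cuts and a price vector $p$ on original and artificial items such that $(x^*,p)$ is a price-match equilibrium of the augmented auction with $p\,a^{i*}=\rho^{VCG}_i$ for every bidder $i$ — if and only if the VCG payment vector is a minimum-revenue core-selecting (MRC) payment vector.
   Context: Combinatorial auction: item types $j\in\mathcal J$ with supply $c_j\in\mathbb Z_{\ge1}$ (vector $c$); bidders $\mathcal I$; finite set of bids $\mathcal K$, bid $k$ made by bidder $i(k)$ with bundle $a^k\in\mathbb Z^J_{\ge0}$, $a^k\le c$, amount $b_k\ge0$; $\mathcal K_i$ = bids of bidder $i$; bids taken truthful. $\bm A$ = matrix with columns $a^k$, $\bm B$ with $\bm B_{i,k}=1$ iff $k\in\mathcal K_i$. Feasible allocation: $x\in\{0,1\}^K$, $\bm Ax\le c$, $\bm Bx\le\bm 1$. $w(\mathcal C,c',\cdot)$ = maximum total bid amount over feasible allocations with supply $c'$ using only bids of bidders in $\mathcal C$. $x^*$ efficient allocation; $a^{i*},b_{i*}$ bundle and amount of $i$'s accepted bid ($\bm 0,0$ if none). VCG payments: $\rho^{VCG}_i=w(\mathcal I\setminus i,c,\mathcal K)-w(\mathcal I\setminus i,c-a^{i*},\mathcal K)$. A payment vector $\rho$ ($\rho_i=0$ for non-winners) is core-selecting at $x^*$ if $\rho_i\le b_{i*}$ for all $i$ and $\sum_{i\in\mathcal C}(b_{i*}-\rho_i)+\sum_{i\in\mathcal I}\rho_i\ge w(\mathcal C,c,\mathcal K^{\mathcal C})$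 for all $\mathcal C\subseteq\mathcal I$ ($\mathcal K^{\mathcal C}$ = bids of bidders in $\mathcal C$); MRC if it minimizes $\sum_i\rho_i$ among core-selecting vectors. A Walrasian equilibrium (WE) is $(x^*,p)$, $p\ge0$, with $s_i=b_{i*}-p\,a^{i*}\ge0$, $p\,a^k+s_{i(k)}\ge b_k$ for all $k$, and $p_j=0$ for items in excess supply under $x^*$. A WE is a price-match equilibrium (PME) if for every bidder $i$ there is a feasible allocation $x^{-i}$ with $x^{-i}_k=0$ for $k\in\mathcal K_i$, $p\,a^k\le b_k$ whenever $x^{-i}_k=1$, and $p\bm Ax^{-i}=p\bm Ax^*$. A valid cut is $(\alpha,\alpha_0)$, $\alpha\in\mathbb R^K_{\ge0}$, with $\alpha x\le\alpha_0$ for all feasible $x$ and $\alpha x^*=\alpha_0$; it is added as an artificial item by appending row $\alpha$ to $\bm A$ with supply $\alpha_0$, and WE/PME in the augmented auction treat it like an original item. *)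

theory Defs
  imports Complex_Main
begin

text \<open>Bidders have type 'i (set I), items type 'j (set J),
bids type 'k (set K). bidder k is the bidder i(k) of bid k, a k j is the
quantity of item j in the bundle of bid k, b k the amount, c j the supply.
An allocation x in {0,1}^K is represented by the set of accepted bids.\<close>

definition feasible ::
  "'j set \<Rightarrow> 'k set \<Rightarrow> ('k \<Rightarrow> 'j \<Rightarrow> nat) \<Rightarrow> ('k \<Rightarrow> 'i) \<Rightarrow> ('j \<Rightarrow> nat) \<Rightarrow> 'k set \<Rightarrow> bool" where
  "feasible J K a bidder c' x \<longleftrightarrow>
     x \<subseteq> K \<and> (\<forall>j\<in>J. (\<Sum>k\<in>x. a k j) \<le> c' j) \<and>
     (\<forall>k\<in>x. \<forall>k'\<in>x. bidder k = bidder k' \<longrightarrow> k = k')"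

definition wval ::
  "'j set \<Rightarrow> 'k set \<Rightarrow> ('k \<Rightarrow> 'j \<Rightarrow> nat) \<Rightarrow> ('k \<Rightarrow> 'i) \<Rightarrow> ('k \<Rightarrow> real) \<Rightarrow> 'i set \<Rightarrow> ('j \<Rightarrow> nat) \<Rightarrow> real" where
  "wval J K a bidder b C c' =
     Max {(\<Sum>k\<in>x. b k) | x. feasible J K a bidder c' x \<and> (\<forall>k\<in>x. bidder k \<in> C)}"

text \<open>a^{i*} and b_{i*}: bundle and amount of i's accepted bid under xs (zero if none).\<close>
definition win_bundle :: "('k \<Rightarrow> 'j \<Rightarrow> nat) \<Rightarrow> ('k \<Rightarrow> 'i) \<Rightarrow> 'k set \<Rightarrow> 'i \<Rightarrow> 'j \<Rightarrow> nat" where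
  "win_bundle a bidder xs i j = (\<Sum>k\<in>{k\<in>xs. bidder k = i}. a k j)"

definition win_amount :: "('k \<Rightarrow> real) \<Rightarrow> ('k \<Rightarrow> 'i) \<Rightarrow> 'k set \<Rightarrow> 'i \<Rightarrow> real" where
  "win_amount b bidder xs i = (\<Sum>k\<in>{k\<in>xs. bidder k = i}. b k)"

definition is_winner :: "('k \<Rightarrow> 'i) \<Rightarrow> 'k set \<Rightarrow> 'i \<Rightarrow> bool" where
  "is_winner bidder xs i \<longleftrightarrow> (\<exists>k\<in>xs. bidder k = i)"

definition vcg ::
  "'i set \<Rightarrow> 'j set \<Rightarrow> 'k set \<Rightarrow> ('j \<Rightarrow> nat) \<Rightarrow> ('k \<Rightarrow> 'j \<Rightarrow> nat) \<Rightarrow> ('k \<Rightarrow> 'i) \<Rightarrow> ('k \<Rightarrow> real)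
   \<Rightarrow> 'k set \<Rightarrow> 'i \<Rightarrow> real" where
  "vcg I J K c a bidder b xs i =
     wval J K a bidder b (I - {i}) c
     - wval J K a bidder b (I - {i}) (\<lambda>j. c j - win_bundle a bidder xs i j)"

definition core_selecting ::
  "'i set \<Rightarrow> 'j set \<Rightarrow> 'k set \<Rightarrow> ('j \<Rightarrow> nat) \<Rightarrow> ('k \<Rightarrow> 'j \<Rightarrow> nat) \<Rightarrow> ('k \<Rightarrow> 'i) \<Rightarrow> ('k \<Rightarrow> real)
   \<Rightarrow> 'k set \<Rightarrow> ('i \<Rightarrow> real) \<Rightarrow> bool" where
  "core_selecting I J K c a bidder b xs \<rho> \<longleftrightarrow>
     (\<forall>i\<in>I. \<not> is_winner bidder xs i \<longrightarrow> \<rho> i = 0) \<and>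
     (\<forall>i\<in>I. \<rho> i \<le> win_amount b bidder xs i) \<and>
     (\<forall>C. C \<subseteq> I \<longrightarrow>
        (\<Sum>i\<in>C. win_amount b bidder xs i - \<rho> i) + (\<Sum>i\<in>I. \<rho> i) \<ge> wval J K a bidder b C c)"

definition mrc ::
  "'i set \<Rightarrow> 'j set \<Rightarrow> 'k set \<Rightarrow> ('j \<Rightarrow> nat) \<Rightarrow> ('k \<Rightarrow> 'j \<Rightarrow> nat) \<Rightarrow> ('k \<Rightarrow> 'i) \<Rightarrow> ('k \<Rightarrow> real)
   \<Rightarrow> 'k set \<Rightarrow> ('i \<Rightarrow> real) \<Rightarrow> bool" where
  "mrc I J K c a bidder b xs \<rho> \<longleftrightarrow>
     core_selecting I J K c a bidder b xs \<rho> \<and>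
     (\<forall>\<rho>'. core_selecting I J K c a bidder b xs \<rho>' \<longrightarrow> (\<Sum>i\<in>I. \<rho> i) \<le> (\<Sum>i\<in>I. \<rho>' i))"

definition valid_cut ::
  "'j set \<Rightarrow> 'k set \<Rightarrow> ('j \<Rightarrow> nat) \<Rightarrow> ('k \<Rightarrow> 'j \<Rightarrow> nat) \<Rightarrow> ('k \<Rightarrow> 'i) \<Rightarrow> 'k set
   \<Rightarrow> ('k \<Rightarrow> real) \<Rightarrow> real \<Rightarrow> bool" where
  "valid_cut J K c a bidder xs \<alpha> \<alpha>0 \<longleftrightarrow>
     (\<forall>k\<in>K. \<alpha> k \<ge> 0) \<and>
     (\<forall>x. feasible J K a bidder c x \<longrightarrow> (\<Sum>k\<in>x. \<alpha> k) \<le> \<alpha>0) \<and>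
     (\<Sum>k\<in>xs. \<alpha> k) = \<alpha>0"

text \<open>Augmented auction: each cut is an extra item with row alpha and supply alpha0.\<close>
definition aug_feasible ::
  "'j set \<Rightarrow> 'k set \<Rightarrow> ('j \<Rightarrow> nat) \<Rightarrow> ('k \<Rightarrow> 'j \<Rightarrow> nat) \<Rightarrow> ('k \<Rightarrow> 'i)
   \<Rightarrow> (('k \<Rightarrow> real) \<times> real) list \<Rightarrow> 'k set \<Rightarrow> bool" where
  "aug_feasible J K c a bidder cuts x \<longleftrightarrow>
     feasible J K a bidder c x \<and>
     (\<forall>l<length cuts. (\<Sum>k\<in>x. fst (cuts ! l) k) \<le> snd (cuts ! l))"

text \<open>Price of the (augmented) bundle of bid k under prices p (original items)
and q (artificial items, indexed by position in the cut list).\<close>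
definition bid_price ::
  "'j set \<Rightarrow> ('k \<Rightarrow> 'j \<Rightarrow> nat) \<Rightarrow> (('k \<Rightarrow> real) \<times> real) list \<Rightarrow> ('j \<Rightarrow> real) \<Rightarrow> (nat \<Rightarrow> real)
   \<Rightarrow> 'k \<Rightarrow> real" where
  "bid_price J a cuts p q k =
     (\<Sum>j\<in>J. p j * real (a k j)) + (\<Sum>l<length cuts. q l * fst (cuts ! l) k)"

text \<open>p a^{i*} in the augmented auction.\<close>
definition win_price ::
  "'j set \<Rightarrow> ('k \<Rightarrow> 'j \<Rightarrow> nat) \<Rightarrow> ('k \<Rightarrow> 'i) \<Rightarrow> (('k \<Rightarrow> real) \<times> real) list \<Rightarrow> 'k set
   \<Rightarrow> ('j \<Rightarrow> real) \<Rightarrow> (nat \<Rightarrow> real) \<Rightarrow> 'i \<Rightarrow> real" where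
  "win_price J a bidder cuts xs p q i = (\<Sum>k\<in>{k\<in>xs. bidder k = i}. bid_price J a cuts p q k)"

definition walrasian ::
  "'i set \<Rightarrow> 'j set \<Rightarrow> 'k set \<Rightarrow> ('j \<Rightarrow> nat) \<Rightarrow> ('k \<Rightarrow> 'j \<Rightarrow> nat) \<Rightarrow> ('k \<Rightarrow> 'i) \<Rightarrow> ('k \<Rightarrow> real)
   \<Rightarrow> (('k \<Rightarrow> real) \<times> real) list \<Rightarrow> 'k set \<Rightarrow> ('j \<Rightarrow> real) \<Rightarrow> (nat \<Rightarrow> real) \<Rightarrow> bool" where
  "walrasian I J K c a bidder b cuts xs p q \<longleftrightarrow>
     (let s = (\<lambda>i. win_amount b bidder xs i - win_price J a bidder cuts xs p q i) in
       (\<forall>j\<in>J. p j \<ge> 0) \<and> (\<forall>l<length cuts. q l \<ge> 0) \<and>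
       (\<forall>i\<in>I. s i \<ge> 0) \<and>
       (\<forall>k\<in>K. bid_price J a cuts p q k + s (bidder k) \<ge> b k) \<and>
       (\<forall>j\<in>J. (\<Sum>k\<in>xs. a k j) < c j \<longrightarrow> p j = 0) \<and>
       (\<forall>l<length cuts. (\<Sum>k\<in>xs. fst (cuts ! l) k) < snd (cuts ! l) \<longrightarrow> q l = 0))"

definition pme ::
  "'i set \<Rightarrow> 'j set \<Rightarrow> 'k set \<Rightarrow> ('j \<Rightarrow> nat) \<Rightarrow> ('k \<Rightarrow> 'j \<Rightarrow> nat) \<Rightarrow> ('k \<Rightarrow> 'i) \<Rightarrow> ('k \<Rightarrow> real)
   \<Rightarrow> (('k \<Rightarrow> real) \<times> real) list \<Rightarrow> 'k set \<Rightarrow> ('j \<Rightarrow> real) \<Rightarrow> (nat \<Rightarrow> real) \<Rightarrow> bool" where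
  "pme I J K c a bidder b cuts xs p q \<longleftrightarrow>
     walrasian I J K c a bidder b cuts xs p q \<and>
     (\<forall>i\<in>I. \<exists>x. aug_feasible J K c a bidder cuts x \<and>
        (\<forall>k\<in>x. bidder k \<noteq> i) \<and>
        (\<forall>k\<in>x. bid_price J a cuts p q k \<le> b k) \<and>
        (\<Sum>k\<in>x. bid_price J a cuts p q k) = (\<Sum>k\<in>xs. bid_price J a cuts p q k))"

end

theory Submission
  imports Defs
begin

lemma feas_subset: "feasible J K a bidder c' x \<Longrightarrow> x \<subseteq> K"
  by (simp add: feasible_def)

lemma wval_finite:
  assumes "finite K"
  shows "finite {(\<Sum>k\<in>x. b k) | x. feasible J K a bidder c' x \<and> (\<forall>k\<in>x. bidder k \<in> C)}"
proof -
  have "{(\<Sum>k\<in>x. b k) | x. feasible J K a bidder c' x \<and> (\<forall>k\<in>x. bidder k \<in> C)}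
        \<subseteq> (\<lambda>x. \<Sum>k\<in>x. b k) ` Pow K" by (auto simp: feasible_def)
  moreover have "finite ((\<lambda>x. \<Sum>k\<in>x. b k) ` Pow K)" using assms by simp
  ultimately show ?thesis by (rule finite_subset)
qed

lemma wval_ge:
  assumes "finite K" "feasible J K a bidder c' x" "\<forall>k\<in>x. bidder k \<in> C"
  shows "(\<Sum>k\<in>x. b k) \<le> wval J K a bidder b C c'"
  unfolding wval_def by (rule Max_ge[OF wval_finite[OF assms(1)]]) (use assms(2,3) in blast)

lemma feasible_empty: "feasible J K a bidder c' {}"
  by (simp add: feasible_def)

lemma wval_obtain:
  assumes "finite K"
  shows "\<exists>x. feasible J K a bidder c' x \<and> (\<forall>k\<in>x. bidder k \<in> C) \<and> (\<Sum>k\<in>x. b k) = wval J K a bidder b C c'"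
proof -
  have ne: "{(\<Sum>k\<in>x. b k) | x. feasible J K a bidder c' x \<and> (\<forall>k\<in>x. bidder k \<in> C)} \<noteq> {}"
    using feasible_empty by blast
  have "wval J K a bidder b C c' \<in> {(\<Sum>k\<in>x. b k) | x. feasible J K a bidder c' x \<and> (\<forall>k\<in>x. bidder k \<in> C)}"
    unfolding wval_def by (rule Max_in[OF wval_finite[OF assms] ne])
  thus ?thesis by auto
qed

lemma feasible_mono:
  assumes "feasible J K a bidder c1 x" "\<forall>j\<in>J. c1 j \<le> c2 j"
  shows "feasible J K a bidder c2 x"
  using assms unfolding feasible_def by (blast intro: order_trans)

lemma wval_mono_supply:
  assumes "finite K" "\<forall>j\<in>J. c1 j \<le> c2 j"
  shows "wval J K a bidder b C c1 \<le> wval J K a bidder b C c2"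
proof -
  obtain x where "feasible J K a bidder c1 x" "\<forall>k\<in>x. bidder k \<in> C" "(\<Sum>k\<in>x. b k) = wval J K a bidder b C c1"
    using wval_obtain[OF assms(1)] by blast
  moreover have "(\<Sum>k\<in>x. b k) \<le> wval J K a bidder b C c2"
    by (rule wval_ge[OF assms(1) feasible_mono[OF _ assms(2)]]) (use calculation in auto)
  ultimately show ?thesis by simp
qed

lemma feasible_sub:
  assumes "finite K" "feasible J K a bidder c' x" "y \<subseteq> x"
  shows "feasible J K a bidder c' y"
proof -
  have xK: "x \<subseteq> K" using assms(2) by (rule feas_subset)
  have fx: "finite x" using finite_subset[OF xK assms(1)] .
  have fd: "(\<forall>j\<in>J. (\<Sum>k\<in>x. a k j) \<le> c' j)" "(\<forall>k\<in>x. \<forall>k'\<in>x. bidder k = bidder k' \<longrightarrow> k = k')"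
    using assms(2) unfolding feasible_def by auto
  show ?thesis unfolding feasible_def
  proof (intro conjI ballI impI)
    show "y \<subseteq> K" using xK assms(3) by (rule order_trans[rotated])
  next
    fix j assume j: "j \<in> J"
    have "(\<Sum>k\<in>y. a k j) \<le> (\<Sum>k\<in>x. a k j)" by (rule sum_mono2[OF fx assms(3)]) simp
    also have "\<dots> \<le> c' j" using fd(1) j by blast
    finally show "(\<Sum>k\<in>y. a k j) \<le> c' j" .
  next
    fix k k' assume "k \<in> y" "k' \<in> y" "bidder k = bidder k'"
    thus "k = k'" using fd(2) assms(3) by blast
  qed
qed

lemma unique_bid:
  assumes "feasible J K a bidder c' xs" "k \<in> xs"
  shows "{k'\<in>xs. bidder k' = bidder k} = {k}"
  using assms unfolding feasible_def by auto

lemma inj_bidder: "feasible J K a bidder c' x \<Longrightarrow> inj_on bidder x"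
  unfolding feasible_def inj_on_def by blast

lemma key_rest:
  assumes fK: "finite K" and fI: "finite I" and bI: "\<forall>k\<in>K. bidder k \<in> I"
    and fxs: "feasible J K a bidder c xs"
  shows "(\<Sum>i'\<in>I-{i}. win_amount b bidder xs i') \<le> wval J K a bidder b (I-{i}) (\<lambda>j. c j - win_bundle a bidder xs i j)"
proof -
  define xs' where "xs' = {k\<in>xs. bidder k \<noteq> i}"
  have xsK: "xs \<subseteq> K" using feas_subset[OF fxs] .
  have fin: "finite xs" using finite_subset[OF xsK fK] .
  have split: "xs = xs' \<union> {k\<in>xs. bidder k = i}" "xs' \<inter> {k\<in>xs. bidder k = i} = {}"
    unfolding xs'_def by auto
  have feas': "feasible J K a bidder (\<lambda>j. c j - win_bundle a bidder xs i j) xs'"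
    unfolding feasible_def
  proof (intro conjI ballI impI)
    show "xs' \<subseteq> K" using xsK xs'_def by auto
  next
    fix j assume "j \<in> J"
    have "(\<Sum>k\<in>xs. a k j) \<le> c j" using fxs \<open>j \<in> J\<close> by (simp add: feasible_def)
    moreover have "(\<Sum>k\<in>xs. a k j) = (\<Sum>k\<in>xs'. a k j) + win_bundle a bidder xs i j"
      unfolding win_bundle_def
      by (subst split(1), rule sum.union_disjoint) (use fin split xs'_def in auto)
    ultimately show "(\<Sum>k\<in>xs'. a k j) \<le> c j - win_bundle a bidder xs i j" by linarith
  next
    fix k k' assume "k \<in> xs'" "k' \<in> xs'" "bidder k = bidder k'"
    thus "k = k'" using fxs unfolding feasible_def xs'_def by blast
  qed
  have g: "(\<Sum>y\<in>I-{i}. sum b {k\<in>xs'. bidder k = y}) = sum b xs'"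
    by (rule sum.group) (use fin fI xsK bI xs'_def in auto)
  have "(\<Sum>i'\<in>I-{i}. win_amount b bidder xs i') = (\<Sum>y\<in>I-{i}. sum b {k\<in>xs'. bidder k = y})"
    unfolding win_amount_def
  proof (rule sum.cong[OF refl])
    fix y assume "y \<in> I - {i}"
    hence "{k\<in>xs. bidder k = y} = {k\<in>xs'. bidder k = y}" unfolding xs'_def by auto
    thus "sum b {k\<in>xs. bidder k = y} = sum b {k\<in>xs'. bidder k = y}" by simp
  qed
  also have "\<dots> = (\<Sum>k\<in>xs'. b k)" using g by simp
  also have "\<dots> \<le> wval J K a bidder b (I-{i}) (\<lambda>j. c j - win_bundle a bidder xs i j)"
    by (rule wval_ge[OF fK feas']) (use xs'_def xsK bI in auto)
  finally show ?thesis .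
qed

lemma bid_price_sum:
  "(\<Sum>k\<in>y. bid_price J a cuts p q k) =
     (\<Sum>j\<in>J. p j * real (\<Sum>k\<in>y. a k j)) + (\<Sum>l<length cuts. q l * (\<Sum>k\<in>y. fst (cuts!l) k))"
proof -
  have 1: "(\<Sum>k\<in>y. \<Sum>j\<in>J. p j * real (a k j)) = (\<Sum>j\<in>J. p j * real (\<Sum>k\<in>y. a k j))"
    by (subst sum.swap) (simp add: sum_distrib_left of_nat_sum)
  have 2: "(\<Sum>k\<in>y. \<Sum>l<length cuts. q l * fst (cuts!l) k) = (\<Sum>l<length cuts. q l * (\<Sum>k\<in>y. fst (cuts!l) k))"
    by (subst sum.swap) (simp add: sum_distrib_left)
  show ?thesis unfolding bid_price_def sum.distrib 1 2 ..
qed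

lemma price_bound:
  assumes wal: "walrasian I J K c a bidder b cuts xs p q"
    and vc: "\<forall>l<length cuts. valid_cut J K c a bidder xs (fst (cuts ! l)) (snd (cuts ! l))"
    and fx: "feasible J K a bidder c x" and fxs: "feasible J K a bidder c xs"
  shows "(\<Sum>k\<in>x. bid_price J a cuts p q k) \<le> (\<Sum>k\<in>xs. bid_price J a cuts p q k)"
proof -
  have pnn: "\<forall>j\<in>J. p j \<ge> 0" and qnn: "\<forall>l<length cuts. q l \<ge> 0"
    and cs: "\<forall>j\<in>J. (\<Sum>k\<in>xs. a k j) < c j \<longrightarrow> p j = 0"
    using wal unfolding walrasian_def Let_def by auto
  have A: "(\<Sum>j\<in>J. p j * real (\<Sum>k\<in>x. a k j)) \<le> (\<Sum>j\<in>J. p j * real (\<Sum>k\<in>xs. a k j))"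
  proof (rule sum_mono)
    fix j assume j: "j \<in> J"
    have l1: "(\<Sum>k\<in>x. a k j) \<le> c j" using fx j unfolding feasible_def by blast
    have l2: "(\<Sum>k\<in>xs. a k j) \<le> c j" using fxs j unfolding feasible_def by blast
    show "p j * real (\<Sum>k\<in>x. a k j) \<le> p j * real (\<Sum>k\<in>xs. a k j)"
    proof (cases "(\<Sum>k\<in>xs. a k j) < c j")
      case True thus ?thesis using cs j by simp
    next
      case False
      hence e: "(\<Sum>k\<in>xs. a k j) = c j" using l2 by simp
      have "real (\<Sum>k\<in>x. a k j) \<le> real (\<Sum>k\<in>xs. a k j)" using l1 e by linarith
      thus ?thesis using pnn j by (simp only: mult_left_mono)
    qed
  qed
  have B: "(\<Sum>l<length cuts. q l * (\<Sum>k\<in>x. fst (cuts!l) k)) \<le> (\<Sum>l<length cuts. q l * (\<Sum>k\<in>xs. fst (cuts!l) k))"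
  proof (rule sum_mono)
    fix l assume "l \<in> {..<length cuts}"
    hence l: "l < length cuts" by simp
    have "(\<Sum>k\<in>x. fst (cuts!l) k) \<le> (\<Sum>k\<in>xs. fst (cuts!l) k)"
      using vc l fx unfolding valid_cut_def by metis
    thus "q l * (\<Sum>k\<in>x. fst (cuts!l) k) \<le> q l * (\<Sum>k\<in>xs. fst (cuts!l) k)"
      using qnn l by (simp add: mult_left_mono)
  qed
  show ?thesis unfolding bid_price_sum using A B by linarith
qed

lemma sum_group_bidder:
  assumes "finite I" "finite xs" "\<forall>k\<in>xs. bidder k \<in> I"
  shows "(\<Sum>i\<in>I. \<Sum>k\<in>{k\<in>xs. bidder k = i}. f k) = (\<Sum>k\<in>xs. f k)"
  by (rule sum.group) (use assms in auto)

theorem corollary3: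
  fixes I :: "'i set" and J :: "'j set" and K :: "'k set"
    and c :: "'j \<Rightarrow> nat" and a :: "'k \<Rightarrow> 'j \<Rightarrow> nat" and bidder :: "'k \<Rightarrow> 'i"
    and b :: "'k \<Rightarrow> real" and xs :: "'k set"
  assumes "finite I" and "finite J" and "finite K"
    and "\<forall>k\<in>K. bidder k \<in> I"
    and "\<forall>j\<in>J. c j \<ge> 1"
    and "\<forall>k\<in>K. \<forall>j\<in>J. a k j \<le> c j"
    and "\<forall>k\<in>K. b k \<ge> 0"
    and "feasible J K a bidder c xs"
    and "(\<Sum>k\<in>xs. b k) = wval J K a bidder b I c"
  shows "(\<exists>cuts p q.
            (\<forall>l<length cuts. valid_cut J K c a bidder xs (fst (cuts ! l)) (snd (cuts ! l))) \<and>
            pme I J K c a bidder b cuts xs p q \<and>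
            (\<forall>i\<in>I. win_price J a bidder cuts xs p q i = vcg I J K c a bidder b xs i))
         \<longleftrightarrow> mrc I J K c a bidder b xs (vcg I J K c a bidder b xs)"
proof -
  note fI = assms(1) and fJ = assms(2) and fK = assms(3) and bI = assms(4)
    and bnn = assms(7) and fxs = assms(8)
  define V where "V = vcg I J K c a bidder b xs"
  define W where "W = win_amount b bidder xs"
  have xsK: "xs \<subseteq> K" using feas_subset[OF fxs] .
  have finxs: "finite xs" using finite_subset[OF xsK fK] .
  have bxs: "\<forall>k\<in>xs. bidder k \<in> I" using xsK bI by blast
  have nonwin: "V i = 0" if "\<not> is_winner bidder xs i" for i
  proof -
    have "{k\<in>xs. bidder k = i} = {}" using that unfolding is_winner_def by blast
    hence "(\<lambda>j. c j - win_bundle a bidder xs i j) = c" unfolding win_bundle_def by (simp only:) simp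
    thus ?thesis unfolding V_def vcg_def by simp
  qed
  have Vupp: "V i \<le> wval J K a bidder b (I-{i}) c - (\<Sum>i'\<in>I-{i}. W i')" for i
    using key_rest[OF fK fI bI fxs, of b i] unfolding V_def vcg_def W_def by linarith
  have Wxs: "W (bidder k) = b k" if "k \<in> xs" for k
    unfolding W_def win_amount_def using unique_bid[OF fxs that] by simp
  show ?thesis
  proof
    assume "\<exists>cuts p q.
            (\<forall>l<length cuts. valid_cut J K c a bidder xs (fst (cuts ! l)) (snd (cuts ! l))) \<and>
            pme I J K c a bidder b cuts xs p q \<and>
            (\<forall>i\<in>I. win_price J a bidder cuts xs p q i = vcg I J K c a bidder b xs i)"
    then obtain cuts p q where vc: "\<forall>l<length cuts. valid_cut J K c a bidder xs (fst (cuts ! l)) (snd (cuts ! l))"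
      and pm: "pme I J K c a bidder b cuts xs p q"
      and wp: "\<forall>i\<in>I. win_price J a bidder cuts xs p q i = V i" unfolding V_def by blast
    define \<pi> where "\<pi> = bid_price J a cuts p q"
    have wal: "walrasian I J K c a bidder b cuts xs p q" using pm unfolding pme_def by blast
    have wpd: "win_price J a bidder cuts xs p q i = (\<Sum>k\<in>{k\<in>xs. bidder k = i}. \<pi> k)" for i
      unfolding win_price_def \<pi>_def ..
    have snn: "\<forall>i\<in>I. W i - V i \<ge> 0"
      using wal wp unfolding walrasian_def Let_def W_def by auto
    have cover: "\<forall>k\<in>K. \<pi> k + (W (bidder k) - V (bidder k)) \<ge> b k"
    proof
      fix k assume k: "k \<in> K"
      have "bid_price J a cuts p q k + (win_amount b bidder xs (bidder k) - win_price J a bidder cuts xs p q (bidder k)) \<ge> b k"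
        using wal k unfolding walrasian_def Let_def by blast
      thus "\<pi> k + (W (bidder k) - V (bidder k)) \<ge> b k" using wp bI k unfolding \<pi>_def W_def by auto
    qed
    have pixs: "(\<Sum>k\<in>xs. \<pi> k) = (\<Sum>i\<in>I. V i)"
    proof -
      have "(\<Sum>k\<in>xs. \<pi> k) = (\<Sum>i\<in>I. win_price J a bidder cuts xs p q i)"
        unfolding wpd by (rule sum_group_bidder[OF fI finxs bxs, symmetric])
      also have "\<dots> = (\<Sum>i\<in>I. V i)" using wp by simp
      finally show ?thesis .
    qed
    have cs: "core_selecting I J K c a bidder b xs V"
      unfolding core_selecting_def
    proof (intro conjI ballI impI allI)
      fix i assume "i \<in> I" "\<not> is_winner bidder xs i" thus "V i = 0" using nonwin by blast
    next
      fix i assume "i \<in> I" thus "V i \<le> win_amount b bidder xs i" using snn W_def by auto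
    next
      fix C assume CI: "C \<subseteq> I"
      have fC: "finite C" using finite_subset[OF CI fI] .
      obtain x where fx: "feasible J K a bidder c x" and xC: "\<forall>k\<in>x. bidder k \<in> C"
        and xv: "(\<Sum>k\<in>x. b k) = wval J K a bidder b C c" using wval_obtain[OF fK] by blast
      have xK: "x \<subseteq> K" using feas_subset[OF fx] .
      have finx: "finite x" using finite_subset[OF xK fK] .
      have "(\<Sum>k\<in>x. b k) \<le> (\<Sum>k\<in>x. \<pi> k + (W (bidder k) - V (bidder k)))"
        by (rule sum_mono) (use cover xK in auto)
      also have "\<dots> = (\<Sum>k\<in>x. \<pi> k) + (\<Sum>k\<in>x. W (bidder k) - V (bidder k))"
        by (rule sum.distrib)
      also have "(\<Sum>k\<in>x. W (bidder k) - V (bidder k)) = (\<Sum>i\<in>bidder ` x. W i - V i)"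
        using sum.reindex[OF inj_bidder[OF fx], of "\<lambda>i. W i - V i"] by simp
      also have "\<dots> \<le> (\<Sum>i\<in>C. W i - V i)"
        by (rule sum_mono2[OF fC]) (use xC snn CI in auto)
      also have "(\<Sum>k\<in>x. \<pi> k) \<le> (\<Sum>i\<in>I. V i)"
        using price_bound[OF wal vc fx fxs] pixs unfolding \<pi>_def by simp
      finally show "wval J K a bidder b C c \<le> (\<Sum>i\<in>C. win_amount b bidder xs i - V i) + sum V I"
        using xv W_def by simp
    qed
    show "mrc I J K c a bidder b xs (vcg I J K c a bidder b xs)"
      unfolding mrc_def V_def[symmetric]
    proof (intro conjI allI impI)
      show "core_selecting I J K c a bidder b xs V" by (rule cs)
    next
      fix \<rho> assume cr: "core_selecting I J K c a bidder b xs \<rho>"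
      show "sum V I \<le> sum \<rho> I"
      proof (rule sum_mono)
        fix i assume iI: "i \<in> I"
        have "(\<Sum>i'\<in>I-{i}. W i' - \<rho> i') + (\<Sum>i'\<in>I. \<rho> i') \<ge> wval J K a bidder b (I-{i}) c"
          using cr unfolding core_selecting_def W_def by blast
        moreover have "(\<Sum>i'\<in>I. \<rho> i') = \<rho> i + (\<Sum>i'\<in>I-{i}. \<rho> i')"
          using sum.remove[OF fI iI] by simp
        moreover have "(\<Sum>i'\<in>I-{i}. W i' - \<rho> i') = (\<Sum>i'\<in>I-{i}. W i') - (\<Sum>i'\<in>I-{i}. \<rho> i')"
          by (rule sum_subtractf)
        ultimately show "V i \<le> \<rho> i" using Vupp[of i] by linarith
      qed
    qed
  next
    assume "mrc I J K c a bidder b xs (vcg I J K c a bidder b xs)"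
    hence cs: "core_selecting I J K c a bidder b xs V" unfolding mrc_def V_def by blast
    have cs2: "\<forall>i\<in>I. V i \<le> W i" and
      cs3: "\<forall>C. C \<subseteq> I \<longrightarrow> (\<Sum>i\<in>C. W i - V i) + (\<Sum>i\<in>I. V i) \<ge> wval J K a bidder b C c"
      using cs unfolding core_selecting_def W_def by auto
    have Vnn: "V i \<ge> 0" for i
      using wval_mono_supply[OF fK, of J "\<lambda>j. c j - win_bundle a bidder xs i j" c a bidder b "I-{i}"]
      unfolding V_def vcg_def by simp
    define s where "s i = W i - V i" for i
    have snn: "\<forall>i\<in>I. s i \<ge> 0" using cs2 s_def by auto
    define \<pi> where "\<pi> k = max 0 (b k - s (bidder k))" for k
    have pinn: "\<pi> k \<ge> 0" for k unfolding \<pi>_def by simp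
    have pixs1: "\<pi> k = V (bidder k)" if "k \<in> xs" for k
      unfolding \<pi>_def s_def using Wxs[OF that] Vnn[of "bidder k"] by simp
    have wp: "(\<Sum>k\<in>{k\<in>xs. bidder k = i}. \<pi> k) = V i" for i
    proof (cases "is_winner bidder xs i")
      case True
      then obtain k where k: "k \<in> xs" "bidder k = i" unfolding is_winner_def by blast
      show ?thesis using unique_bid[OF fxs k(1)] k pixs1 by simp
    next
      case False
      hence "{k\<in>xs. bidder k = i} = {}" unfolding is_winner_def by blast
      thus ?thesis using nonwin[OF False] by (simp only:) simp
    qed
    have pixs: "(\<Sum>k\<in>xs. \<pi> k) = (\<Sum>i\<in>I. V i)"
      using sum_group_bidder[OF fI finxs bxs, of \<pi>] wp by simp
    have bound: "(\<Sum>k\<in>x. \<pi> k) \<le> (\<Sum>i\<in>I. V i)" if fx: "feasible J K a bidder c x" for x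
    proof -
      define x' where "x' = {k\<in>x. 0 \<le> b k - s (bidder k)}"
      have xK: "x \<subseteq> K" using feas_subset[OF fx] .
      have finx: "finite x" using finite_subset[OF xK fK] .
      have fx': "feasible J K a bidder c x'" by (rule feasible_sub[OF fK fx]) (auto simp: x'_def)
      have CI: "bidder ` x' \<subseteq> I" using xK bI x'_def by auto
      have "(\<Sum>k\<in>x. \<pi> k) = (\<Sum>k\<in>x'. b k - s (bidder k))"
        unfolding x'_def sum.inter_filter[OF finx] \<pi>_def by (rule sum.cong) auto
      also have "\<dots> = (\<Sum>k\<in>x'. b k) - (\<Sum>k\<in>x'. s (bidder k))" by (rule sum_subtractf)
      also have "(\<Sum>k\<in>x'. s (bidder k)) = (\<Sum>i\<in>bidder ` x'. s i)"
        using sum.reindex[OF inj_bidder[OF fx'], of s] by simp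
      also have "(\<Sum>k\<in>x'. b k) \<le> wval J K a bidder b (bidder ` x') c"
        by (rule wval_ge[OF fK fx']) auto
      also have "\<dots> \<le> (\<Sum>i\<in>bidder ` x'. W i - V i) + (\<Sum>i\<in>I. V i)" using cs3 CI by blast
      finally show ?thesis unfolding s_def by simp
    qed
    define cuts where "cuts = [(\<pi>, \<Sum>k\<in>xs. \<pi> k)]"
    define p :: "'j \<Rightarrow> real" where "p = (\<lambda>_. 0)"
    define q :: "nat \<Rightarrow> real" where "q = (\<lambda>_. 1)"
    have bp: "bid_price J a cuts p q k = \<pi> k" for k
      unfolding bid_price_def cuts_def p_def q_def by simp
    have bp': "bid_price J a cuts p q = \<pi>" by (rule ext) (rule bp)
    have wpI: "win_price J a bidder cuts xs p q i = V i" for i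
      unfolding win_price_def bp' using wp by simp
    have vcut: "valid_cut J K c a bidder xs \<pi> (\<Sum>k\<in>xs. \<pi> k)"
      unfolding valid_cut_def using pinn bound pixs by auto
    have wal: "walrasian I J K c a bidder b cuts xs p q"
      unfolding walrasian_def Let_def wpI bp'
    proof (intro conjI ballI allI impI)
      fix i assume "i \<in> I" thus "0 \<le> win_amount b bidder xs i - V i" using cs2 W_def by auto
    next
      fix k assume k: "k \<in> K"
      have "0 \<le> s (bidder k)" using snn bI k by blast
      thus "b k \<le> \<pi> k + (win_amount b bidder xs (bidder k) - V (bidder k))"
        unfolding \<pi>_def s_def W_def by linarith
    next
      fix l assume "l < length cuts" "(\<Sum>k\<in>xs. fst (cuts ! l) k) < snd (cuts ! l)"
      thus "q l = 0" unfolding cuts_def by simp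
    qed (auto simp: p_def q_def)
    have pmeq: "pme I J K c a bidder b cuts xs p q"
      unfolding pme_def
    proof (intro conjI ballI)
      show "walrasian I J K c a bidder b cuts xs p q" by (rule wal)
    next
      fix i assume iI: "i \<in> I"
      obtain y where fy: "feasible J K a bidder c y" and yC: "\<forall>k\<in>y. bidder k \<in> I-{i}"
        and yv: "(\<Sum>k\<in>y. b k) = wval J K a bidder b (I-{i}) c" using wval_obtain[OF fK] by blast
      have yK: "y \<subseteq> K" using feas_subset[OF fy] .
      have finy: "finite y" using finite_subset[OF yK fK] .
      have le: "(\<Sum>k\<in>y. \<pi> k) \<le> (\<Sum>k\<in>xs. \<pi> k)" using bound[OF fy] pixs by simp
      have "(\<Sum>k\<in>y. b k - s (bidder k)) \<le> (\<Sum>k\<in>y. \<pi> k)"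
        by (rule sum_mono) (simp add: \<pi>_def)
      moreover have "(\<Sum>k\<in>y. b k - s (bidder k)) = (\<Sum>k\<in>y. b k) - (\<Sum>i\<in>bidder ` y. s i)"
        using sum.reindex[OF inj_bidder[OF fy], of s] by (simp add: sum_subtractf)
      moreover have "(\<Sum>i\<in>bidder ` y. s i) \<le> (\<Sum>i\<in>I-{i}. s i)"
        by (rule sum_mono2) (use fI yC snn in auto)
      moreover have "(\<Sum>i\<in>I-{i}. s i) = (\<Sum>i\<in>I-{i}. W i) - (\<Sum>i\<in>I-{i}. V i)"
        unfolding s_def by (rule sum_subtractf)
      moreover have "(\<Sum>i'\<in>I. V i') = V i + (\<Sum>i'\<in>I-{i}. V i')"
        using sum.remove[OF fI iI] by simp
      ultimately have ge: "(\<Sum>k\<in>xs. \<pi> k) \<le> (\<Sum>k\<in>y. \<pi> k)"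
        using Vupp[of i] yv pixs by linarith
      show "\<exists>x. aug_feasible J K c a bidder cuts x \<and> (\<forall>k\<in>x. bidder k \<noteq> i) \<and>
          (\<forall>k\<in>x. bid_price J a cuts p q k \<le> b k) \<and>
          (\<Sum>k\<in>x. bid_price J a cuts p q k) = (\<Sum>k\<in>xs. bid_price J a cuts p q k)"
      proof (intro exI conjI ballI)
        show "aug_feasible J K c a bidder cuts y"
          unfolding aug_feasible_def using fy le by (simp add: cuts_def)
      next
        fix k assume "k \<in> y" thus "bidder k \<noteq> i" using yC by blast
      next
        fix k assume k: "k \<in> y"
        have "0 \<le> s (bidder k)" using snn yC k by blast
        moreover have "0 \<le> b k" using bnn yK k by blast
        ultimately show "bid_price J a cuts p q k \<le> b k" unfolding bp \<pi>_def by simp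
      next
        show "(\<Sum>k\<in>y. bid_price J a cuts p q k) = (\<Sum>k\<in>xs. bid_price J a cuts p q k)"
          unfolding bp' using le ge by linarith
      qed
    qed
    show "\<exists>cuts p q.
            (\<forall>l<length cuts. valid_cut J K c a bidder xs (fst (cuts ! l)) (snd (cuts ! l))) \<and>
            pme I J K c a bidder b cuts xs p q \<and>
            (\<forall>i\<in>I. win_price J a bidder cuts xs p q i = vcg I J K c a bidder b xs i)"
      by (rule exI[of _ cuts], rule exI[of _ p], rule exI[of _ q])
         (use vcut pmeq wpI in \<open>simp add: cuts_def V_def\<close>)
  qed
qed

end
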